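(* For each order function $h$ there exists an order function $g$ such that every $\mathrm{DNR}_g$ function computes (is Turing-reducible to... i.e., Turing-computes) an $\mathrm{SNPR}_h$ function. That is, for every $f\in\mathrm{DNR}_g$ there is $j\le_T f$ with $j\in\mathrm{SNPR}_h$.
   Context: $\varphi_e$ denotes the $e$-th partial recursive function. A function $f:\omega\to\omega$ is DNR (diagonally non-recursive) if $f(e)\neq\varphi_e(e)$ for every $e$ such that $\varphi_e(e)$ is defined. A function $f:\omega\to\omega$ is strongly non-partial-recursive (SNPR) if for every partial recursive function $\psi$, for all but finitely many $n$, if $\psi(n)$ is defined then $f(n)\neq\psi(n)$. An order function is a recursive, nondecreasing, unbounded function $h:\omega\to\omega$ with $h(0)\ge 2$. For a class $\mathrm{C}$ of functions $\omega\to\omega$ and an order function $h$, $\mathrm{C}_h$ denotes the subclass of members of $\mathrm{C}$ bounded by $h$ (i.e., $f(n)<h(n)$ for all $n$). *)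

theory Defs
  imports Main "HOL-Library.Nat_Bijection"
begin

text \<open>Programs for (oracle) partial recursive functions, Kleene style.
  Arguments are lists of naturals.\<close>

datatype recf =
    Z
  | S                      (* successor of first argument *)
  | Id nat
  | Cn recf "recf list"
  | Pr recf recf           (* primitive recursion on first argument *)
  | Mn recf
  | Orc                    (* oracle query on first argument *)

inductive eval :: "(nat \<Rightarrow> nat) \<Rightarrow> recf \<Rightarrow> nat list \<Rightarrow> nat \<Rightarrow> bool"
  for A :: "nat \<Rightarrow> nat" where
  eval_Z: "eval A Z xs 0"
| eval_S: "eval A S (x # xs) (Suc x)"
| eval_Id: "n < length xs \<Longrightarrow> eval A (Id n) xs (xs ! n)"
| eval_Cn: "list_all2 (\<lambda>g y. eval A g xs y) gs ys \<Longrightarrow> eval A f ys z \<Longrightarrow> eval A (Cn f gs) xs z"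
| eval_Pr0: "eval A f xs y \<Longrightarrow> eval A (Pr f g) (0 # xs) y"
| eval_PrS: "eval A (Pr f g) (n # xs) r \<Longrightarrow> eval A g (n # r # xs) y \<Longrightarrow> eval A (Pr f g) (Suc n # xs) y"
| eval_Mn: "eval A f (y # xs) 0 \<Longrightarrow> (\<forall>z<y. \<exists>v. v \<noteq> 0 \<and> eval A f (z # xs) v) \<Longrightarrow> eval A (Mn f) xs y"
| eval_Orc: "eval A Orc (x # xs) (A x)"
monos list.rel_mono_strong

primrec enc :: "recf \<Rightarrow> nat" where
  "enc Z = prod_encode (0, 0)"
| "enc S = prod_encode (1, 0)"
| "enc (Id n) = prod_encode (2, n)"
| "enc (Cn f gs) = prod_encode (3, prod_encode (enc f, list_encode (map enc gs)))"
| "enc (Pr f g) = prod_encode (4, prod_encode (enc f, enc g))"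
| "enc (Mn f) = prod_encode (5, enc f)"
| "enc Orc = prod_encode (6, 0)"

text \<open>Indices that code no program give the nowhere-defined function. Oracle-free
  computation: the oracle is the constant 0 function (a recursive function).\<close>

definition phi :: "nat \<Rightarrow> nat \<Rightarrow> nat \<Rightarrow> bool" where
  "phi e x y \<longleftrightarrow> (\<exists>p. enc p = e \<and> eval (\<lambda>_. 0) p [x] y)"

definition recursive_fn :: "(nat \<Rightarrow> nat) \<Rightarrow> bool" where
  "recursive_fn h \<longleftrightarrow> (\<exists>e. \<forall>x. phi e x (h x))"

definition turing_le :: "(nat \<Rightarrow> nat) \<Rightarrow> (nat \<Rightarrow> nat) \<Rightarrow> bool" where
  "turing_le j f \<longleftrightarrow> (\<exists>p. \<forall>x. eval f p [x] (j x))"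

definition order_fn :: "(nat \<Rightarrow> nat) \<Rightarrow> bool" where
  "order_fn h \<longleftrightarrow> recursive_fn h \<and> mono h \<and> (\<forall>m. \<exists>n. m < h n) \<and> 2 \<le> h 0"

definition DNR :: "(nat \<Rightarrow> nat) \<Rightarrow> bool" where
  "DNR f \<longleftrightarrow> (\<forall>e y. phi e e y \<longrightarrow> f e \<noteq> y)"

definition SNPR :: "(nat \<Rightarrow> nat) \<Rightarrow> bool" where
  "SNPR f \<longleftrightarrow> (\<forall>e. finite {n. phi e n (f n)})"

definition bounded_by :: "(nat \<Rightarrow> nat) \<Rightarrow> (nat \<Rightarrow> nat) \<Rightarrow> bool" where
  "bounded_by f h \<longleftrightarrow> (\<forall>n. f n < h n)"

end

theory Submission
  imports Defs
begin


definition rc :: "(nat \<Rightarrow> nat) \<Rightarrow> nat \<Rightarrow> (nat list \<Rightarrow> nat) \<Rightarrow> bool" where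
  "rc A k F \<longleftrightarrow> (\<exists>p. \<forall>xs. length xs = k \<longrightarrow> eval A p xs (F xs))"

primrec C :: "nat \<Rightarrow> recf" where
  "C 0 = Z" | "C (Suc n) = Cn S [C n]"

lemma eval_C: "eval A (C n) xs n"
proof (induction n)
  case 0 then show ?case using eval_Z by simp
next
  case (Suc n)
  have "eval A S [n] (Suc n)" using eval_S by blast
  then show ?case using Suc by (auto intro!: eval_Cn[where ys="[n]"])
qed

lemma rc_const[intro]: "rc A k (\<lambda>xs. c)"
  unfolding rc_def using eval_C by blast

lemma rc_proj[intro]: "i < k \<Longrightarrow> rc A k (\<lambda>xs. xs ! i)"
  unfolding rc_def using eval_Id by (metis)

lemma rc_cong: "rc A k F \<Longrightarrow> (\<And>xs. length xs = k \<Longrightarrow> F xs = G xs) \<Longrightarrow> rc A k G"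
  unfolding rc_def by metis

lemma progs_exist:
  assumes "\<forall>G\<in>set Gs. rc A k G"
  shows "\<exists>ps. list_all2 (\<lambda>G p. \<forall>xs. length xs = k \<longrightarrow> eval A p xs (G xs)) Gs ps"
  using assms
proof (induction Gs)
  case Nil then show ?case by auto
next
  case (Cons G Gs)
  then obtain ps where "list_all2 (\<lambda>G p. \<forall>xs. length xs = k \<longrightarrow> eval A p xs (G xs)) Gs ps" by auto
  moreover from Cons obtain p where "\<forall>xs. length xs = k \<longrightarrow> eval A p xs (G xs)" unfolding rc_def by auto
  ultimately show ?case by (intro exI[of _ "p # ps"]) auto
qed

lemma rc_comp:
  assumes "rc A (length Gs) F" "\<forall>G\<in>set Gs. rc A k G"
  shows "rc A k (\<lambda>xs. F (map (\<lambda>G. G xs) Gs))"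
proof -
  obtain pf where pf: "\<forall>ys. length ys = length Gs \<longrightarrow> eval A pf ys (F ys)" using assms(1) unfolding rc_def by auto
  obtain ps where ps: "list_all2 (\<lambda>G p. \<forall>xs. length xs = k \<longrightarrow> eval A p xs (G xs)) Gs ps"
    using progs_exist[OF assms(2)] by auto
  show ?thesis unfolding rc_def
  proof (intro exI[of _ "Cn pf ps"] allI impI)
    fix xs :: "nat list" assume len: "length xs = k"
    have "list_all2 (\<lambda>g y. eval A g xs y) ps (map (\<lambda>G. G xs) Gs)"
      using ps len by (auto simp: list_all2_conv_all_nth)
    moreover have "eval A pf (map (\<lambda>G. G xs) Gs) (F (map (\<lambda>G. G xs) Gs))" using pf by simp
    ultimately show "eval A (Cn pf ps) xs (F (map (\<lambda>G. G xs) Gs))" by (rule eval_Cn)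
  qed
qed

lemma rc_comp1: "rc A 1 F \<Longrightarrow> rc A k G1 \<Longrightarrow> rc A k (\<lambda>xs. F [G1 xs])"
  using rc_comp[of A "[G1]" F k] by simp
lemma rc_comp2: "rc A 2 F \<Longrightarrow> rc A k G1 \<Longrightarrow> rc A k G2 \<Longrightarrow> rc A k (\<lambda>xs. F [G1 xs, G2 xs])"
  using rc_comp[of A "[G1,G2]" F k] by (simp add: numeral_2_eq_2)
lemma rc_comp3: "rc A 3 F \<Longrightarrow> rc A k G1 \<Longrightarrow> rc A k G2 \<Longrightarrow> rc A k G3 \<Longrightarrow> rc A k (\<lambda>xs. F [G1 xs, G2 xs, G3 xs])"
  using rc_comp[of A "[G1,G2,G3]" F k] by (simp add: numeral_3_eq_3)

lemma rc_cons: "rc A (Suc k) F \<Longrightarrow> rc A k M \<Longrightarrow> rc A k (\<lambda>xs. F (M xs # xs))"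
proof -
  assume a: "rc A (Suc k) F" "rc A k M"
  let ?Gs = "M # map (\<lambda>i xs. xs ! i) [0..<k]"
  have "rc A k (\<lambda>xs. F (map (\<lambda>G. G xs) ?Gs))"
    by (rule rc_comp) (use a in auto)
  then show ?thesis by (rule rc_cong) (simp add: comp_def, metis map_nth)
qed

fun prec :: "(nat list \<Rightarrow> nat) \<Rightarrow> (nat list \<Rightarrow> nat) \<Rightarrow> nat \<Rightarrow> nat list \<Rightarrow> nat" where
  "prec F G 0 ys = F ys" | "prec F G (Suc n) ys = G (n # prec F G n ys # ys)"

lemma rc_pr:
  assumes "rc A k F" "rc A (Suc (Suc k)) G"
  shows "rc A (Suc k) (\<lambda>xs. prec F G (hd xs) (tl xs))"
proof -
  obtain pf where pf: "\<forall>ys. length ys = k \<longrightarrow> eval A pf ys (F ys)" using assms(1) unfolding rc_def by auto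
  obtain pg where pg: "\<forall>ys. length ys = Suc (Suc k) \<longrightarrow> eval A pg ys (G ys)" using assms(2) unfolding rc_def by auto
  have *: "eval A (Pr pf pg) (n # ys) (prec F G n ys)" if "length ys = k" for n ys
  proof (induction n)
    case 0 show ?case using pf that by (auto intro: eval_Pr0)
  next
    case (Suc n)
    show ?case using Suc pg that by (auto intro!: eval_PrS[OF Suc.IH[OF Suc.prems]])
  qed
  show ?thesis unfolding rc_def
    by (intro exI[of _ "Pr pf pg"] allI impI) (case_tac xs, auto intro: *)
qed

lemma rc_orc: "rc A 1 (\<lambda>xs. A (xs ! 0))"
  unfolding rc_def by (intro exI[of _ Orc] allI impI) (case_tac xs, auto intro: eval_Orc)

lemma rc_S: "rc A 1 (\<lambda>xs. Suc (xs ! 0))"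
  unfolding rc_def by (intro exI[of _ S] allI impI) (case_tac xs, auto intro: eval_S)

primrec strip :: "recf \<Rightarrow> recf" where
  "strip Z = Z" | "strip S = S" | "strip (Id n) = Id n"
| "strip (Cn f gs) = Cn (strip f) (map strip gs)"
| "strip (Pr f g) = Pr (strip f) (strip g)"
| "strip (Mn f) = Mn (strip f)"
| "strip Orc = Cn Z []"

lemma eval_strip: "eval (\<lambda>_. 0) p xs y \<Longrightarrow> eval A (strip p) xs y"
proof (induction rule: eval.induct)
  case (eval_Cn xs gs ys f z)
  then show ?case by (auto intro!: eval.eval_Cn simp: list_all2_map1 elim: list_all2_mono)
next
  case (eval_Orc x xs)
  then show ?case using eval.eval_Cn[of A "x#xs" "[]" "[]" Z 0] eval.eval_Z by simp
qed (auto intro: eval.intros)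

lemma rc_strip: "rc (\<lambda>_. 0) k F \<Longrightarrow> rc A k F"
  unfolding rc_def using eval_strip by blast

lemma rc_Suc: "rc A k G \<Longrightarrow> rc A k (\<lambda>xs. Suc (G xs))"
  using rc_comp1[OF rc_S] by simp

lemma rc_tl: "rc A k G \<Longrightarrow> rc A (Suc k) (\<lambda>ys. G (tl ys))"
proof -
  assume a: "rc A k G"
  let ?Gs = "map (\<lambda>i ys. ys ! Suc i) [0..<k]"
  have "rc A (Suc k) (\<lambda>ys. G (map (\<lambda>G. G ys) ?Gs))"
    by (rule rc_comp) (use a in auto)
  then show ?thesis
    by (rule rc_cong) (auto simp: comp_def nth_tl intro!: arg_cong[where f=G] nth_equalityI)
qed

lemma rc_hd: "0 < k \<Longrightarrow> rc A k hd"
proof -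
  assume k: "0 < k"
  have e: "length xs = k \<Longrightarrow> xs!0 = hd xs" for xs :: "nat list" using k by (cases xs) auto
  show ?thesis using rc_proj[of 0 k A] k by (auto intro: rc_cong e)
qed

lemma rc_cong': "rc A k F \<Longrightarrow> k = k' \<Longrightarrow> (\<And>xs. length xs = k' \<Longrightarrow> F xs = G xs) \<Longrightarrow> rc A k' G"
  using rc_cong by blast

lemma len1: "length xs = Suc 0 \<Longrightarrow> (\<And>a. xs = [a] \<Longrightarrow> P) \<Longrightarrow> P"
  by (cases xs) auto

lemma len2: "length xs = 2 \<Longrightarrow> (\<And>a b. xs = [a,b] \<Longrightarrow> P) \<Longrightarrow> P"
  by (cases xs; cases "tl xs") (auto simp: numeral_2_eq_2)

lemma rc_add0: "rc A 2 (\<lambda>xs. xs!0 + xs!1)"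
proof -
  have h1: "rc A (Suc 1) (\<lambda>xs. prec (\<lambda>ys. ys!0) (\<lambda>zs. Suc (zs!1)) (hd xs) (tl xs))"
    by (intro rc_pr rc_proj rc_Suc; simp)
  have h2: "prec (\<lambda>ys. ys!0) (\<lambda>zs. Suc (zs!1)) n ys = n + ys!0" for n ys by (induction n) auto
  show ?thesis by (rule rc_cong'[OF h1]) (unfold h2, auto elim!: len2)
qed

lemma rc_add: "rc A k G1 \<Longrightarrow> rc A k G2 \<Longrightarrow> rc A k (\<lambda>xs. G1 xs + G2 xs)"
  using rc_comp2[OF rc_add0] by simp

lemma rc_mult0: "rc A 2 (\<lambda>xs. xs!0 * xs!1)"
proof -
  have h1: "rc A (Suc 1) (\<lambda>xs. prec (\<lambda>ys. 0) (\<lambda>zs. zs!1 + zs!2) (hd xs) (tl xs))"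
    by (intro rc_pr rc_proj rc_add rc_const; simp)
  have h2: "prec (\<lambda>ys. 0) (\<lambda>zs. zs!1 + zs!2) n ys = n * ys!0" for n ys by (induction n) auto
  show ?thesis by (rule rc_cong'[OF h1]) (unfold h2, auto elim!: len2)
qed

lemma rc_mult: "rc A k G1 \<Longrightarrow> rc A k G2 \<Longrightarrow> rc A k (\<lambda>xs. G1 xs * G2 xs)"
  using rc_comp2[OF rc_mult0] by simp

lemma rc_pred0: "rc A 1 (\<lambda>xs. xs!0 - 1)"
proof -
  have h1: "rc A (Suc 0) (\<lambda>xs. prec (\<lambda>ys. 0) (\<lambda>zs. zs!0) (hd xs) (tl xs))"
    by (intro rc_pr rc_proj rc_const; simp)
  have h2: "prec (\<lambda>ys. 0) (\<lambda>zs. zs!0) n ys = n - 1" for n ys by (induction n) auto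
  show ?thesis by (rule rc_cong'[OF h1]) (unfold h2, auto elim!: len1)
qed

lemma rc_sub0: "rc A 2 (\<lambda>xs. xs!1 - xs!0)"
proof -
  have h1: "rc A (Suc 1) (\<lambda>xs. prec (\<lambda>ys. ys!0) (\<lambda>zs. zs!1 - 1) (hd xs) (tl xs))"
  proof (intro rc_pr rc_proj)
    show "rc A (Suc (Suc 1)) (\<lambda>zs. zs!1 - 1)"
      using rc_comp1[OF rc_pred0, of A "Suc (Suc 1)" "\<lambda>zs. zs!1"] by (simp add: rc_proj)
  qed simp
  have h2: "prec (\<lambda>ys. ys!0) (\<lambda>zs. zs!1 - 1) n ys = ys!0 - n" for n ys by (induction n) auto
  show ?thesis by (rule rc_cong'[OF h1]) (unfold h2, auto elim!: len2)
qed

lemma rc_sub: "rc A k G1 \<Longrightarrow> rc A k G2 \<Longrightarrow> rc A k (\<lambda>xs. G1 xs - G2 xs)"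
  using rc_comp2[OF rc_sub0, of A k G2 G1] by simp

lemma rc_pow0: "rc A 2 (\<lambda>xs. xs!1 ^ xs!0)"
proof -
  have h1: "rc A (Suc 1) (\<lambda>xs. prec (\<lambda>ys. 1) (\<lambda>zs. zs!1 * zs!2) (hd xs) (tl xs))"
    by (intro rc_pr rc_proj rc_mult rc_const; simp)
  have h2: "prec (\<lambda>ys. 1) (\<lambda>zs. zs!1 * zs!2) n ys = ys!0 ^ n" for n ys by (induction n) auto
  show ?thesis by (rule rc_cong'[OF h1]) (unfold h2, auto elim!: len2)
qed

lemma rc_pow: "rc A k G1 \<Longrightarrow> rc A k G2 \<Longrightarrow> rc A k (\<lambda>xs. G1 xs ^ G2 xs)"
  using rc_comp2[OF rc_pow0, of A k G2 G1] by simp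

lemma rc_tri0: "rc A 1 (\<lambda>xs. triangle (xs!0))"
proof -
  have h1: "rc A (Suc 0) (\<lambda>xs. prec (\<lambda>ys. 0) (\<lambda>zs. zs!1 + Suc (zs!0)) (hd xs) (tl xs))"
    by (intro rc_pr rc_proj rc_add rc_Suc rc_const; simp)
  have h2: "prec (\<lambda>ys. 0) (\<lambda>zs. zs!1 + Suc (zs!0)) n ys = triangle n" for n ys by (induction n) auto
  show ?thesis by (rule rc_cong'[OF h1]) (unfold h2, auto elim!: len1)
qed

lemma rc_pe: "rc A k G1 \<Longrightarrow> rc A k G2 \<Longrightarrow> rc A k (\<lambda>xs. prod_encode (G1 xs, G2 xs))"
proof -
  assume a: "rc A k G1" "rc A k G2"
  have "rc A k (\<lambda>xs. triangle (G1 xs + G2 xs) + G1 xs)"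
    using rc_comp1[OF rc_tri0, of A k "\<lambda>xs. G1 xs + G2 xs"] a by (simp add: rc_add)
  then show ?thesis by (rule rc_cong) (simp add: prod_encode_def)
qed

lemma rc_le: "rc A k G1 \<Longrightarrow> rc A k G2 \<Longrightarrow> rc A k (\<lambda>xs. if G1 xs \<le> G2 xs then 1 else 0)"
proof -
  assume a: "rc A k G1" "rc A k G2"
  have "rc A k (\<lambda>xs. 1 - (G1 xs - G2 xs))" using a by (intro rc_sub rc_const)
  then show ?thesis by (rule rc_cong) auto
qed

lemma rc_lt: "rc A k G1 \<Longrightarrow> rc A k G2 \<Longrightarrow> rc A k (\<lambda>xs. if G1 xs < G2 xs then 1 else 0)"
proof -
  assume a: "rc A k G1" "rc A k G2"
  have "rc A k (\<lambda>xs. if Suc (G1 xs) \<le> G2 xs then 1 else 0)" using a by (intro rc_le rc_Suc)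
  then show ?thesis by (rule rc_cong) auto
qed

lemma rc_sum:
  assumes "rc A (Suc k) (\<lambda>ys. F (hd ys) (tl ys))" "rc A k M"
  shows "rc A k (\<lambda>xs. \<Sum>i<M xs. F i xs)"
proof -
  let ?Gs = "(\<lambda>zs. zs ! 0) # map (\<lambda>i zs. zs ! Suc (Suc i)) [0..<k]"
  have "rc A (Suc (Suc k)) (\<lambda>zs. (\<lambda>ys. F (hd ys) (tl ys)) (map (\<lambda>G. G zs) ?Gs))"
    by (rule rc_comp) (use assms in auto)
  then have "rc A (Suc (Suc k)) (\<lambda>zs. F (zs ! 0) (drop 2 zs))"
    by (rule rc_cong) (auto simp: comp_def intro!: arg_cong[where f="F _"] nth_equalityI)
  then have "rc A (Suc (Suc k)) (\<lambda>zs. zs ! 1 + F (zs ! 0) (drop 2 zs))" by (intro rc_add rc_proj; simp)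
  then have "rc A (Suc k) (\<lambda>xs. prec (\<lambda>_. 0) (\<lambda>zs. zs ! 1 + F (zs ! 0) (drop 2 zs)) (hd xs) (tl xs))"
    by (intro rc_pr rc_const)
  from rc_cons[OF this assms(2)]
  have "rc A k (\<lambda>xs. prec (\<lambda>_. 0) (\<lambda>zs. zs ! 1 + F (zs ! 0) (drop 2 zs)) (M xs) xs)" by simp
  moreover have "prec (\<lambda>_. 0) (\<lambda>zs. zs ! 1 + F (zs ! 0) (drop 2 zs)) n xs = (\<Sum>i<n. F i xs)" for n xs
    by (induction n) auto
  ultimately show ?thesis by simp
qed




lemma tl_nth': "Suc i < length xs \<Longrightarrow> xs ! Suc i = tl xs ! i"
  by (cases xs) auto

lemma rc_tlnth: "Suc i < k \<Longrightarrow> rc A k (\<lambda>ys. tl ys ! i)"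
proof -
  assume a: "Suc i < k"
  show ?thesis using rc_proj[OF a, of A]
  proof (rule rc_cong)
    fix xs :: "nat list" assume "length xs = k"
    then show "xs ! Suc i = tl xs ! i" using a tl_nth'[of i xs] by simp
  qed
qed

lemma rc_orc': "rc A k G \<Longrightarrow> rc A k (\<lambda>xs. A (G xs))"
  using rc_comp1[OF rc_orc] by simp

lemma map_enc_inj: "(\<forall>g\<in>set gs. \<forall>q. enc g = enc q \<longrightarrow> g = q) \<Longrightarrow> map enc gs = map enc gs' \<Longrightarrow> gs = gs'"
  by (induction gs arbitrary: gs') (auto simp: Cons_eq_map_conv)

lemma enc_inj: "enc p = enc q \<Longrightarrow> p = q"
proof (induction p arbitrary: q)
  case (Cn f gs)
  then show ?case
  proof (cases q)
    case (Cn f' gs')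
    with Cn.prems have "enc f = enc f'" "list_encode (map enc gs) = list_encode (map enc gs')" by auto
    then have "f = f'" "map enc gs = map enc gs'" using Cn.IH(1)
      by (auto dest: arg_cong[where f=list_decode])
    then show ?thesis using Cn map_enc_inj Cn.IH(2) by blast
  qed auto
qed (case_tac q; auto)+

lemma rc_rec:
  assumes "recursive_fn h" shows "rc A 1 (\<lambda>xs. h (xs!0))"
proof -
  obtain e where e: "\<forall>x. phi e x (h x)" using assms unfolding recursive_fn_def by auto
  obtain p0 where p0: "enc p0 = e" using e unfolding phi_def by blast
  have "eval (\<lambda>_. 0) p0 [x] (h x)" for x
    using e[rule_format, of x] p0 enc_inj unfolding phi_def by blast
  then have "rc (\<lambda>_. 0) 1 (\<lambda>xs. h (xs!0))" unfolding rc_def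
    by (intro exI[of _ p0]) (auto elim!: len1)
  then show ?thesis by (rule rc_strip)
qed

lemma rc_h: "recursive_fn h \<Longrightarrow> rc A k G \<Longrightarrow> rc A k (\<lambda>xs. h (G xs))"
  using rc_comp1[OF rc_rec] by simp

lemma cnt_props:
  fixes Q :: "nat \<Rightarrow> bool"
  assumes "Q 0" "\<And>v. Q (Suc v) \<Longrightarrow> Q v"
  shows "Q (\<Sum>v<n. if Q (Suc v) then 1 else 0) \<and> (\<Sum>v<n. if Q (Suc v) then 1 else 0) \<le> n \<and>
         (\<forall>v\<le>n. Q v \<longrightarrow> v \<le> (\<Sum>v<n. if Q (Suc v) then 1 else 0))"
proof (induction n)
  case 0 then show ?case using assms by auto
next
  case (Suc n)
  let ?c = "\<Sum>v<n. if Q (Suc v) then 1 else 0"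
  show ?case
  proof (cases "Q (Suc n)")
    case True
    then have "Q n" using assms by blast
    then have "?c = n" using Suc by fastforce
    then show ?thesis using True by (auto simp: le_Suc_eq)
  next
    case False
    then show ?thesis using Suc by (auto simp: le_Suc_eq)
  qed
qed

lemma div_cnt: "(y::nat) div d = (\<Sum>t<y. (if Suc t * d \<le> y then 1 else 0) * (if 1 \<le> d then 1 else 0))"
proof (cases "d = 0")
  case True then show ?thesis by simp
next
  case False
  let ?Q = "\<lambda>v. v * d \<le> y"
  have q: "?Q 0" "\<And>v. ?Q (Suc v) \<Longrightarrow> ?Q v" by auto
  note c = cnt_props[of ?Q, OF q, where n=y]
  let ?c = "\<Sum>v<y. if Suc v * d \<le> y then 1 else 0"
  have "y div d * d \<le> y" by simp
  moreover have "y div d \<le> y" by simp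
  ultimately have "y div d \<le> ?c" using c by blast
  moreover have "?c \<le> y div d" using c False by (simp add: less_eq_div_iff_mult_less_eq)
  ultimately show ?thesis using False by simp
qed

lemma rc_div: "rc A k G1 \<Longrightarrow> rc A k G2 \<Longrightarrow> rc A k (\<lambda>xs. G1 xs div G2 xs)"
proof -
  assume a: "rc A k G1" "rc A k G2"
  have "rc A k (\<lambda>xs. \<Sum>t<G1 xs. (if Suc t * G2 xs \<le> G1 xs then 1 else 0) * (if 1 \<le> G2 xs then 1 else 0))"
    using a by (intro rc_sum rc_mult rc_le rc_Suc rc_hd rc_const rc_tl; simp)
  then show ?thesis by (rule rc_cong) (rule div_cnt[symmetric])
qed

lemma rc_mod: "rc A k G1 \<Longrightarrow> rc A k G2 \<Longrightarrow> rc A k (\<lambda>xs. G1 xs mod G2 xs)"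
proof -
  assume a: "rc A k G1" "rc A k G2"
  have "rc A k (\<lambda>xs. G1 xs - G1 xs div G2 xs * G2 xs)"
    using a by (intro rc_sub rc_mult rc_div)
  then show ?thesis by (rule rc_cong) (simp add: minus_div_mult_eq_mod)
qed




primrec cc :: "nat \<Rightarrow> nat" where
  "cc 0 = enc Z"
| "cc (Suc n) = prod_encode (3, prod_encode (enc S, list_encode [cc n]))"

lemma enc_C: "enc (C n) = cc n"
  by (induction n) auto

lemma rc_cc0: "rc A 1 (\<lambda>xs. cc (xs!0))"
proof -
  have h1: "rc A (Suc 0) (\<lambda>xs. prec (\<lambda>ys. enc Z) (\<lambda>zs. prod_encode (3, prod_encode (enc S, Suc (prod_encode (zs!1, 0))))) (hd xs) (tl xs))"
    by (intro rc_pr rc_pe rc_Suc rc_proj rc_const; simp)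
  have h2: "prec (\<lambda>ys. enc Z) (\<lambda>zs. prod_encode (3, prod_encode (enc S, Suc (prod_encode (zs!1, 0))))) n ys = cc n" for n ys
    by (induction n) auto
  show ?thesis by (rule rc_cong'[OF h1]) (unfold h2, auto elim!: len1)
qed

lemma rc_cc: "rc A k G \<Longrightarrow> rc A k (\<lambda>xs. cc (G xs))"
  using rc_comp1[OF rc_cc0] by simp

definition V :: "(nat \<Rightarrow> nat) \<Rightarrow> nat \<Rightarrow> nat" where
  "V h n = (\<Sum>v<n. if (Suc v + 2) ^ Suc v \<le> h n then 1 else 0)"

definition B :: "(nat \<Rightarrow> nat) \<Rightarrow> nat \<Rightarrow> nat" where
  "B h n = V h n + 2"

definition Dig :: "(nat \<Rightarrow> nat) \<Rightarrow> nat \<Rightarrow> nat \<Rightarrow> nat \<Rightarrow> nat" where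
  "Dig h y e n = (y div (B h n ^ e)) mod B h n"

lemma rc_V: "recursive_fn h \<Longrightarrow> rc A k G \<Longrightarrow> rc A k (\<lambda>xs. V h (G xs))"
proof -
  assume hr: "recursive_fn h" and g: "rc A k G"
  have "rc A 1 (\<lambda>xs. \<Sum>v<xs!0. if (Suc v + 2) ^ Suc v \<le> h (xs!0) then 1 else 0)"
    by (intro rc_sum rc_le rc_pow rc_add rc_Suc rc_hd rc_const rc_h[OF hr] rc_tlnth rc_proj; simp)
  then have "rc A 1 (\<lambda>xs. V h (xs!0))" unfolding V_def .
  from rc_comp1[OF this g] show ?thesis by simp
qed

lemma rc_B: "recursive_fn h \<Longrightarrow> rc A k G \<Longrightarrow> rc A k (\<lambda>xs. B h (G xs))"
  unfolding B_def by (intro rc_add rc_V rc_const)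

lemma rc_Dig0: "recursive_fn h \<Longrightarrow> rc A 3 (\<lambda>xs. Dig h (xs!0) (xs!1) (xs!2))"
  unfolding Dig_def by (intro rc_mod rc_div rc_pow rc_B rc_proj; simp)

definition Dprog :: "(nat \<Rightarrow> nat) \<Rightarrow> recf" where
  "Dprog h = (SOME p. \<forall>xs. length xs = 3 \<longrightarrow> eval (\<lambda>_. 0) p xs (Dig h (xs!0) (xs!1) (xs!2)))"

lemma Dprog: "recursive_fn h \<Longrightarrow> eval (\<lambda>_. 0) (Dprog h) [y, e, n] (Dig h y e n)"
proof -
  assume "recursive_fn h"
  from rc_Dig0[OF this, of "\<lambda>_. 0"] have "\<exists>p. \<forall>xs. length xs = 3 \<longrightarrow> eval (\<lambda>_. 0) p xs (Dig h (xs!0) (xs!1) (xs!2))"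
    unfolding rc_def .
  from someI_ex[OF this] show ?thesis unfolding Dprog_def[symmetric] by (metis length_Cons list.size(3) numeral_3_eq_3 nth_Cons_0 nth_Cons_Suc One_nat_def numeral_2_eq_2)
qed

definition aa :: "(nat \<Rightarrow> nat) \<Rightarrow> nat \<Rightarrow> nat \<Rightarrow> nat" where
  "aa h e n = prod_encode (3, prod_encode (enc (Dprog h),
      list_encode [prod_encode (3, prod_encode (e, list_encode [cc n])), cc e, cc n]))"

lemma rc_aa: "rc A k G1 \<Longrightarrow> rc A k G2 \<Longrightarrow> rc A k (\<lambda>xs. aa h (G1 xs) (G2 xs))"
  unfolding aa_def list_encode.simps by (intro rc_pe rc_Suc rc_cc rc_const; assumption)

lemma phi_aa:
  assumes hr: "recursive_fn h" and ph: "phi e n y"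
  shows "phi (aa h e n) (aa h e n) (Dig h y e n)"
proof -
  obtain P where P: "enc P = e" "eval (\<lambda>_. 0) P [n] y" using ph unfolding phi_def by auto
  let ?Q = "Cn (Dprog h) [Cn P [C n], C e, C n]"
  have "enc ?Q = aa h e n" by (simp add: aa_def enc_C P(1))
  moreover have "eval (\<lambda>_. 0) ?Q [x] (Dig h y e n)" for x
  proof (rule eval_Cn[where ys="[y, e, n]"])
    have "eval (\<lambda>_. 0) (Cn P [C n]) [x] y"
      by (rule eval_Cn[where ys="[n]"]) (auto intro: eval_C P(2))
    then show "list_all2 (\<lambda>g y. eval (\<lambda>_. 0) g [x] y) [Cn P [C n], C e, C n] [y, e, n]"
      by (auto intro: eval_C)
    show "eval (\<lambda>_. 0) (Dprog h) [y, e, n] (Dig h y e n)" by (rule Dprog[OF hr])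
  qed
  ultimately show ?thesis unfolding phi_def by blast
qed

definition AI :: "(nat \<Rightarrow> nat) \<Rightarrow> nat \<Rightarrow> nat" where
  "AI h n = (\<Sum>i<Suc n. aa h i n)"
definition AA :: "(nat \<Rightarrow> nat) \<Rightarrow> nat \<Rightarrow> nat" where
  "AA h n = (\<Sum>m<Suc n. AI h m)"
definition tau :: "(nat \<Rightarrow> nat) \<Rightarrow> nat \<Rightarrow> nat" where
  "tau h m = (\<Sum>n<m. if AA h n < m then 1 else 0)"
definition g :: "(nat \<Rightarrow> nat) \<Rightarrow> nat \<Rightarrow> nat" where
  "g h m = B h (tau h m)"
definition jj :: "(nat \<Rightarrow> nat) \<Rightarrow> (nat \<Rightarrow> nat) \<Rightarrow> nat \<Rightarrow> nat" where
  "jj h f n = (\<Sum>i<V h n. f (aa h i n) * B h n ^ i)"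

lemma rc_AI: "rc A k G \<Longrightarrow> rc A k (\<lambda>xs. AI h (G xs))"
proof -
  assume g: "rc A k G"
  have "rc A 1 (\<lambda>xs. \<Sum>i<Suc (xs!0). aa h i (xs!0))"
    by (intro rc_sum rc_aa rc_Suc rc_hd rc_tlnth rc_proj; simp)
  then have "rc A 1 (\<lambda>xs. AI h (xs!0))" unfolding AI_def .
  from rc_comp1[OF this g] show ?thesis by simp
qed

lemma rc_AA: "rc A k G \<Longrightarrow> rc A k (\<lambda>xs. AA h (G xs))"
proof -
  assume g: "rc A k G"
  have "rc A 1 (\<lambda>xs. \<Sum>m<Suc (xs!0). AI h m)"
    by (intro rc_sum rc_AI rc_Suc rc_hd rc_proj; simp)
  then have "rc A 1 (\<lambda>xs. AA h (xs!0))" unfolding AA_def .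
  from rc_comp1[OF this g] show ?thesis by simp
qed

lemma rc_g: "recursive_fn h \<Longrightarrow> rc A 1 (\<lambda>xs. g h (xs!0))"
proof -
  assume hr: "recursive_fn h"
  have "rc A 1 (\<lambda>xs. B h (\<Sum>n<xs!0. if AA h n < xs!0 then 1 else 0))"
    by (intro rc_B[OF hr] rc_sum rc_lt rc_AA rc_hd rc_tlnth rc_proj; simp)
  then show ?thesis unfolding g_def tau_def .
qed

lemma rc_jj: "recursive_fn h \<Longrightarrow> rc f 1 (\<lambda>xs. jj h f (xs!0))"
proof -
  assume hr: "recursive_fn h"
  have "rc f 1 (\<lambda>xs. \<Sum>i<V h (xs!0). f (aa h i (xs!0)) * B h (xs!0) ^ i)"
    by (intro rc_sum rc_mult rc_pow rc_orc' rc_aa rc_B[OF hr] rc_V[OF hr] rc_hd rc_tlnth rc_proj; simp)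
  then show ?thesis unfolding jj_def .
qed




lemma sum_digits_bound:
  fixes b :: nat
  assumes "\<forall>i<m. d i < b"
  shows "(\<Sum>i<m. d i * b ^ i) < b ^ m"
  using assms
proof (induction m)
  case 0 then show ?case by simp
next
  case (Suc m)
  then have s: "(\<Sum>i<m. d i * b ^ i) < b ^ m" and dm: "Suc (d m) \<le> b" by auto
  have "(\<Sum>i<Suc m. d i * b ^ i) = (\<Sum>i<m. d i * b ^ i) + d m * b ^ m" by simp
  also have "\<dots> < b ^ m + d m * b ^ m" using s by simp
  also have "\<dots> = Suc (d m) * b ^ m" by simp
  also have "\<dots> \<le> b * b ^ m" using dm by (rule mult_le_mono1)
  finally show ?case by simp
qed

lemma digit:
  fixes b :: nat
  assumes "\<forall>i<m. d i < b" "e < m"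
  shows "((\<Sum>i<m. d i * b ^ i) div b ^ e) mod b = d e"
  using assms
proof (induction m)
  case 0 then show ?case by simp
next
  case (Suc m)
  have bp: "b > 0" using Suc.prems by auto
  show ?case
  proof (cases "e = m")
    case True
    have s: "(\<Sum>i<m. d i * b ^ i) < b ^ m" using sum_digits_bound Suc.prems by auto
    have "(\<Sum>i<Suc m. d i * b ^ i) div b ^ e = ((\<Sum>i<m. d i * b ^ i) + b ^ m * d m) div b ^ m"
      using True by (simp add: mult.commute)
    also have "\<dots> = d m" using s bp by simp
    finally show ?thesis using True Suc.prems by simp
  next
    case False
    then have em: "e < m" using Suc.prems by simp
    define c where "c = m - Suc e"
    have c: "m = e + Suc c" using em by (simp add: c_def)
    have p: "b ^ m = b ^ e * (b * b ^ c)" by (simp add: c power_add)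
    have eq: "(\<Sum>i<Suc m. d i * b ^ i) = (\<Sum>i<m. d i * b ^ i) + b ^ e * (b * (d m * b ^ c))"
      by (simp only: sum.lessThan_Suc p) (simp add: ac_simps)
    have "(\<Sum>i<Suc m. d i * b ^ i) div b ^ e = b * (d m * b ^ c) + (\<Sum>i<m. d i * b ^ i) div b ^ e"
      unfolding eq by (rule div_mult_self2) (use bp in simp)
    then have "((\<Sum>i<Suc m. d i * b ^ i) div b ^ e) mod b = ((\<Sum>i<m. d i * b ^ i) div b ^ e) mod b"
      by (simp only: mod_mult_self4)
    then show ?thesis using Suc em by simp
  qed
qed

context
  fixes h :: "nat \<Rightarrow> nat"
  assumes oh: "order_fn h"
begin

lemma hr: "recursive_fn h" and hm: "mono h" and hu: "\<forall>m. \<exists>n. m < h n" and h0: "2 \<le> h 0"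
  using oh unfolding order_fn_def by auto

lemma V_props: "(V h n + 2) ^ V h n \<le> h n \<and> V h n \<le> n \<and> (\<forall>v\<le>n. (v + 2) ^ v \<le> h n \<longrightarrow> v \<le> V h n)"
proof -
  let ?Q = "\<lambda>v. (v + 2) ^ v \<le> h n"
  have "h 0 \<le> h n" using hm by (simp add: monoD)
  then have "1 \<le> h n" using h0 by simp
  then have q0: "?Q 0" by simp
  have qs: "?Q v" if "?Q (Suc v)" for v
  proof -
    have "(v + 2) ^ v \<le> (Suc v + 2) ^ v" by (rule power_mono) auto
    also have "\<dots> \<le> (Suc v + 2) ^ Suc v" by (rule power_increasing) auto
    finally show ?thesis using that by simp
  qed
  show ?thesis using cnt_props[of ?Q, OF q0 qs, where n=n] unfolding V_def by simp
qed

lemma V_mono: "n \<le> n' \<Longrightarrow> V h n \<le> V h n'"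
proof -
  assume a: "n \<le> n'"
  have "(V h n + 2) ^ V h n \<le> h n'" using V_props[of n] hm a by (meson le_trans monoD)
  moreover have "V h n \<le> n'" using V_props[of n] a by simp
  ultimately show ?thesis using V_props[of n'] by blast
qed

lemma V_unb: "\<exists>N. c \<le> V h N"
proof -
  obtain n where n: "(c + 2) ^ c < h n" using hu by blast
  let ?N = "max n c"
  have "h n \<le> h ?N" using hm by (simp add: monoD)
  then have "(c + 2) ^ c \<le> h ?N" using n by simp
  then show ?thesis using V_props[of ?N] by (intro exI[of _ ?N]) auto
qed

lemma AA_mono: "n \<le> n' \<Longrightarrow> AA h n \<le> AA h n'"
proof -
  assume "n \<le> n'"
  moreover have "\<And>n. AA h n \<le> AA h (Suc n)" unfolding AA_def by simp
  ultimately show ?thesis using lift_Suc_mono_le[of "AA h" n n'] by blast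
qed

lemma aa_le_AA: "i \<le> n \<Longrightarrow> aa h i n \<le> AA h n"
proof -
  assume "i \<le> n"
  then have "aa h i n \<le> AI h n" unfolding AI_def by (intro member_le_sum) auto
  also have "\<dots> \<le> AA h n" unfolding AA_def by (intro member_le_sum) auto
  finally show ?thesis .
qed

lemma tau_le: "m \<le> AA h n \<Longrightarrow> tau h m \<le> n"
proof -
  assume a: "m \<le> AA h n"
  have "tau h m \<le> (\<Sum>k<m. if k < n then 1 else 0)" unfolding tau_def
  proof (rule sum_mono)
    fix k assume "k \<in> {..<m}"
    show "(if AA h k < m then 1 else 0) \<le> (if k < n then 1 else 0 :: nat)"
      using a AA_mono[of n k] by (cases "n \<le> k") auto
  qed
  also have "(\<Sum>k<m. if k < n then 1 else 0 :: nat) = min m n" by (induction m) auto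
  finally show ?thesis by simp
qed

lemma tau_mono: "m \<le> m' \<Longrightarrow> tau h m \<le> tau h m'"
proof -
  assume a: "m \<le> m'"
  have "tau h m \<le> (\<Sum>k<m. if AA h k < m' then 1 else 0)" unfolding tau_def
    by (rule sum_mono) (use a in auto)
  also have "\<dots> \<le> tau h m'" unfolding tau_def by (rule sum_mono2) (use a in auto)
  finally show ?thesis .
qed

lemma tau_unb: "\<exists>m. N \<le> tau h m"
proof -
  let ?m = "Suc (N + (\<Sum>n<N. AA h n))"
  have "N = (\<Sum>k<N. if AA h k < ?m then 1 else 0 :: nat)"
  proof -
    have "\<forall>k<N. AA h k < ?m"
    proof (intro allI impI)
      fix k assume "k < N"
      then have "AA h k \<le> (\<Sum>n<N. AA h n)" by (intro member_le_sum) auto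
      then show "AA h k < ?m" by simp
    qed
    then show ?thesis by simp
  qed
  also have "\<dots> \<le> tau h ?m" unfolding tau_def by (rule sum_mono2) auto
  finally show ?thesis by blast
qed

lemma B_mono: "n \<le> n' \<Longrightarrow> B h n \<le> B h n'"
  unfolding B_def using V_mono by simp

lemma g_order: "order_fn (g h)"
  unfolding order_fn_def
proof (intro conjI)
  show "recursive_fn (g h)"
  proof -
    obtain p where p: "\<forall>xs. length xs = 1 \<longrightarrow> eval (\<lambda>_. 0) p xs (g h (xs!0))"
      using rc_g[OF hr, of "\<lambda>_. 0"] unfolding rc_def by blast
    have "eval (\<lambda>_. 0) p [x] (g h x)" for x using p[rule_format, of "[x]"] by simp
    then show ?thesis unfolding recursive_fn_def phi_def by blast
  qed
  show "mono (g h)" unfolding g_def by (intro monoI B_mono tau_mono)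
  show "\<forall>m. \<exists>n. m < g h n"
  proof
    fix m
    obtain N where N: "m \<le> V h N" using V_unb by blast
    obtain x where x: "N \<le> tau h x" using tau_unb by blast
    have "V h N \<le> V h (tau h x)" using V_mono x by simp
    then show "\<exists>n. m < g h n" using N unfolding g_def B_def by (intro exI[of _ x]) simp
  qed
  show "2 \<le> g h 0" unfolding g_def B_def by simp
qed

lemma main:
  assumes dnr: "DNR f" and bd: "bounded_by f (g h)"
  shows "turing_le (jj h f) f \<and> SNPR (jj h f) \<and> bounded_by (jj h f) h"
proof (intro conjI)
  show "turing_le (jj h f) f"
  proof -
    obtain p where p: "\<forall>xs. length xs = 1 \<longrightarrow> eval f p xs (jj h f (xs!0))"
      using rc_jj[OF hr, of f] unfolding rc_def by blast
    have "eval f p [x] (jj h f x)" for x using p[rule_format, of "[x]"] by simp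
    then show ?thesis unfolding turing_le_def by blast
  qed
  have dig_bd: "f (aa h i n) < B h n" if "i < V h n" for i n
  proof -
    have "i \<le> n" using that V_props[of n] by simp
    then have "tau h (aa h i n) \<le> n" using tau_le aa_le_AA by blast
    then have "g h (aa h i n) \<le> B h n" unfolding g_def by (rule B_mono)
    then show ?thesis using bd unfolding bounded_by_def by (meson less_le_trans)
  qed
  show "bounded_by (jj h f) h" unfolding bounded_by_def
  proof
    fix n
    have "jj h f n < B h n ^ V h n" unfolding jj_def by (rule sum_digits_bound) (use dig_bd in auto)
    also have "\<dots> \<le> h n" using V_props[of n] unfolding B_def by simp
    finally show "jj h f n < h n" .
  qed
  show "SNPR (jj h f)" unfolding SNPR_def
  proof
    fix e
    obtain N where N: "Suc e \<le> V h N" using V_unb by blast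
    have "{n. phi e n (jj h f n)} \<subseteq> {..<N}"
    proof
      fix n assume "n \<in> {n. phi e n (jj h f n)}"
      then have ph: "phi e n (jj h f n)" by simp
      show "n \<in> {..<N}"
      proof (rule ccontr)
        assume "n \<notin> {..<N}"
        then have "e < V h n" using N V_mono[of N n] by simp
        have "Dig h (jj h f n) e n = f (aa h e n)" unfolding Dig_def jj_def
          by (rule digit) (use dig_bd \<open>e < V h n\<close> in auto)
        moreover have "phi (aa h e n) (aa h e n) (Dig h (jj h f n) e n)" by (rule phi_aa[OF hr ph])
        ultimately show False using dnr unfolding DNR_def by auto
      qed
    qed
    then show "finite {n. phi e n (jj h f n)}" using finite_subset by blast
  qed
qed

end

theorem theorem1:
  assumes "order_fn h"
  shows "\<exists>g. order_fn g \<and>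
           (\<forall>f. DNR f \<and> bounded_by f g \<longrightarrow>
              (\<exists>j. turing_le j f \<and> SNPR j \<and> bounded_by j h))"
  using g_order[OF assms] main[OF assms] by blast


end
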